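(* For a ring $R$, the following conditions are equivalent: (1) $R$ is strongly $n$-torsion clean for some $n\in\mathbb{N}$; (2) $R$ is strongly clean and the unit group $U(R)$ has finite exponent.
   Context: All rings are associative with identity. A ring is strongly clean if every element is a sum $e+u$ of an idempotent $e$ and a unit $u$ with $eu=ue$. A ring $R$ is strongly $n$-torsion clean if every $r\in R$ can be written $r=e+u$ with $e^2=e$, $u\in U(R)$, $u^n=1$ and $eu=ue$, and $n$ is the smallest natural number with this property. *)

theory Defs
  imports Main
begin

text \<open>Rings are modelled by the type class ring_1 (associative, with identity,
not necessarily commutative). Units are two-sided invertible elements.\<close>

definition ring_unit :: "'a::ring_1 \<Rightarrow> bool" where
  "ring_unit u \<longleftrightarrow> (\<exists>v. u * v = 1 \<and> v * u = 1)"

definition strongly_clean :: "'a::ring_1 itself \<Rightarrow> bool" where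
  "strongly_clean _ \<longleftrightarrow>
     (\<forall>r::'a. \<exists>e u. r = e + u \<and> e * e = e \<and> ring_unit u \<and> e * u = u * e)"

definition n_torsion_clean_decomp :: "'a::ring_1 itself \<Rightarrow> nat \<Rightarrow> bool" where
  "n_torsion_clean_decomp _ n \<longleftrightarrow>
     (\<forall>r::'a. \<exists>e u. r = e + u \<and> e * e = e \<and> ring_unit u \<and> u ^ n = 1 \<and> e * u = u * e)"

definition strongly_n_torsion_clean :: "'a::ring_1 itself \<Rightarrow> nat \<Rightarrow> bool" where
  "strongly_n_torsion_clean R n \<longleftrightarrow>
     n \<ge> 1 \<and> n_torsion_clean_decomp R n \<and>
     (\<forall>m. 1 \<le> m \<and> m < n \<longrightarrow> \<not> n_torsion_clean_decomp R m)"

definition units_finite_exponent :: "'a::ring_1 itself \<Rightarrow> bool" where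
  "units_finite_exponent _ \<longleftrightarrow> (\<exists>m::nat. m \<ge> 1 \<and> (\<forall>u::'a. ring_unit u \<longrightarrow> u ^ m = 1))"

end

theory Submission
  imports Defs "HOL-Library.FuncSet"
begin

lemma comm_pow_mult:
  fixes a b :: "'a::ring_1"
  assumes "a * b = b * a"
  shows "(a * b) ^ n = a ^ n * b ^ n"
proof (induction n)
  case 0 then show ?case by simp
next
  case (Suc n)
  have c: "b ^ n * a = a * b ^ n"
    using power_commuting_commutes[of b a n] assms by (simp add: mult.assoc)
  have "(a*b)^Suc n = a^n * b^n * (a*b)" using Suc by (simp only: power_Suc2)
  also have "\<dots> = a^n * (b^n * a) * b" by (simp add: mult.assoc)
  also have "\<dots> = a^n * a * (b^n * b)" by (simp add: c mult.assoc)
  finally show ?case by (simp only: power_Suc2)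
qed

lemma idem_pow:
  fixes f :: "'a::ring_1"
  assumes "f * f = f"
  shows "f * f ^ n = f"
  by (induction n) (simp_all add: mult.assoc[symmetric] assms)

lemma idem_aux:
  fixes f x :: "'a::ring_1"
  assumes "f * f = f" "f * x = x * f"
  shows "f * x ^ n = f * (f * x) ^ n"
proof (induction n)
  case 0 then show ?case by simp
next
  case (Suc n)
  have c0: "(f*x)*f = f*(f*x)" by (metis assms(2) mult.assoc)
  have c: "(f*x)^n * f = f * (f*x)^n"
    using power_commuting_commutes[OF c0] .
  have "f * x ^ Suc n = f * (f*x)^n * x" using Suc by (simp only: power_Suc2 mult.assoc[symmetric])
  also have "\<dots> = f * ((f*x)^n * f) * x" 
    by (simp only: c mult.assoc[symmetric] assms(1))
  finally show ?case by (simp only: power_Suc2 mult.assoc)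
qed

lemma corner_lemma:
  fixes f x y :: "'a::ring_1"
  assumes "f * f = f" "f * x = x * f" "f * y = y * f" "f * x = f * y" "y ^ n = 1"
  shows "f * x ^ n = f"
proof -
  have "f * x ^ n = f * (f*x)^n" using idem_aux assms by blast
  also have "\<dots> = f * (f*y)^n" using assms by simp
  also have "\<dots> = f * y^n" using idem_aux[of f y n] assms by simp
  finally show ?thesis using assms by simp
qed

lemma decomp_facts:
  fixes e v r :: "'a::ring_1"
  assumes "r = e + v" "e * e = e" "e * v = v * e" "v ^ n = 1"
  shows "e * (r - 1) ^ n = e" "(1 - e) * r ^ n = 1 - e"
proof -
  show "e * (r - 1) ^ n = e"
    apply (rule corner_lemma[where y = v])
    using assms by (simp_all add: algebra_simps)
  show "(1 - e) * r ^ n = 1 - e"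
    apply (rule corner_lemma[where y = v])
    using assms by (simp_all add: algebra_simps)
qed

lemma char_lemma:
  assumes n: "n \<ge> 1" and D: "n_torsion_clean_decomp TYPE('a::ring_1) n"
  shows "(of_nat ((2^n - 1) * (3^n - 1)) :: 'a) = 0"
proof -
  obtain e v :: 'a where d: "3 = e + v" "e * e = e" "ring_unit v" "v ^ n = 1" "e * v = v * e"
    using D unfolding n_torsion_clean_decomp_def by blast
  define A :: 'a where "A = of_nat (2^n)"
  define B :: 'a where "B = of_nat (3^n)"
  have "e * ((3::'a) - 1) ^ n = e" using decomp_facts(1)[OF d(1,2,5,4)] .
  hence eA: "e * (A - 1) = 0" by (simp add: A_def algebra_simps)
  have "(1 - e) * (3::'a) ^ n = 1 - e" using decomp_facts(2)[OF d(1,2,5,4)] .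
  hence eB: "(1 - e) * (B - 1) = 0" by (simp add: B_def algebra_simps)
  have c1: "(A - 1) * e = e * (A - 1)" unfolding A_def
    by (metis mult_of_nat_commute of_nat_1 of_nat_diff one_le_power one_le_numeral)
  have c2: "(B - 1) * (1 - e) = (1 - e) * (B - 1)" unfolding B_def
    by (metis mult_of_nat_commute of_nat_1 of_nat_diff one_le_power one_le_numeral)
  have "(of_nat ((2^n - 1) * (3^n - 1)) :: 'a) = (A - 1) * (B - 1)"
    by (simp add: A_def B_def of_nat_diff)
  also have "\<dots> = (A - 1) * (B - 1) * (e + (1 - e))" by simp
  also have "\<dots> = (B - 1) * ((A - 1) * e) + (A - 1) * ((B - 1) * (1 - e))"
  proof -
    have AB: "(A - 1) * (B - 1) = (B - 1) * (A - 1)" unfolding A_def B_def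
      by (metis mult_of_nat_commute of_nat_1 of_nat_diff one_le_power one_le_numeral)
    have "(A - 1) * (B - 1) * (e + (1 - e)) = (A - 1) * (B - 1) * e + (A - 1) * (B - 1) * (1 - e)"
      by (simp only: distrib_left)
    also have "\<dots> = (B - 1) * (A - 1) * e + (A - 1) * (B - 1) * (1 - e)" using AB by simp
    finally show ?thesis by (simp only: mult.assoc)
  qed
  also have "\<dots> = 0" by (simp add: c1 c2 eA eB)
  finally show ?thesis .
qed

definition spanP :: "'a::ring_1 \<Rightarrow> nat \<Rightarrow> 'a \<Rightarrow> bool" where
  "spanP s N x \<longleftrightarrow> (\<exists>f. x = (\<Sum>i\<le>N. of_nat (f i) * s ^ i))"

lemma spanP_add: "spanP s N x \<Longrightarrow> spanP s N y \<Longrightarrow> spanP s N (x + y)"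
  unfolding spanP_def
proof (elim exE)
  fix f g assume "x = (\<Sum>i\<le>N. of_nat (f i) * s ^ i)" "y = (\<Sum>i\<le>N. of_nat (g i) * s ^ i)"
  then have "x + y = (\<Sum>i\<le>N. of_nat (f i + g i) * s ^ i)"
    by (simp add: sum.distrib distrib_right)
  then show "\<exists>h. x + y = (\<Sum>i\<le>N. of_nat (h i) * s ^ i)" by (rule exI[where x="\<lambda>i. f i + g i"])
qed

lemma spanP_one: "spanP s N 1"
  unfolding spanP_def
proof
  show "1 = (\<Sum>i\<le>N. of_nat (if i = 0 then 1 else 0) * s ^ i)"
  proof -
    have "\<And>i. of_nat (if i = 0 then 1 else 0) * s^i = (if i = 0 then 1 else (0::'a))" by simp
    then show ?thesis by (simp only: sum.delta) simp
  qed
qed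

lemma spanP_times_s:
  assumes ss: "s ^ Suc (Suc m) = s" and x: "spanP s (Suc m) x"
  shows "spanP s (Suc m) (x * s)"
proof -
  obtain f where fx: "x = (\<Sum>i\<le>Suc m. of_nat (f i) * s ^ i)" using x unfolding spanP_def by blast
  have "x * s = (\<Sum>i\<le>Suc m. of_nat (f i) * s ^ Suc i)"
    by (simp only: fx sum_distrib_right mult.assoc power_Suc2)
  also have "\<dots> = (\<Sum>i\<le>m. of_nat (f i) * s ^ Suc i) + of_nat (f (Suc m)) * s"
    using ss by simp
  finally have xs: "x * s = (\<Sum>i\<le>m. of_nat (f i) * s ^ Suc i) + of_nat (f (Suc m)) * s" .
  have p1: "spanP s (Suc m) (\<Sum>i\<le>m. of_nat (f i) * s ^ Suc i)"
    unfolding spanP_def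
  proof
    show "(\<Sum>i\<le>m. of_nat (f i) * s ^ Suc i) =
       (\<Sum>i\<le>Suc m. of_nat (case i of 0 \<Rightarrow> 0 | Suc j \<Rightarrow> f j) * s ^ i)"
      by (simp only: sum.atMost_Suc_shift) simp
  qed
  have p2: "spanP s (Suc m) (of_nat (f (Suc m)) * s)"
    unfolding spanP_def
  proof
    show "of_nat (f (Suc m)) * s =
       (\<Sum>i\<le>Suc m. of_nat (if i = 1 then f (Suc m) else 0) * s ^ i)"
    proof -
      have "\<And>i. of_nat (if i = 1 then f (Suc m) else 0) * s^i = (if i = 1 then of_nat (f (Suc m)) * s else (0::'a))" by simp
      then show ?thesis by (simp only: sum.delta) simp
    qed
  qed
  show ?thesis using xs p1 p2 spanP_add by metis
qed

lemma spanP_pow: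
  assumes ss: "s ^ Suc (Suc m) = s"
  shows "spanP s (Suc m) ((1 + s) ^ k)"
proof (induction k)
  case 0 then show ?case by (simp add: spanP_one)
next
  case (Suc k)
  have "(1 + s) ^ Suc k = (1 + s) ^ k + (1 + s) ^ k * s"
    by (simp only: power_Suc2 distrib_left mult_1_right)
  then show ?case using Suc spanP_add spanP_times_s[OF ss] by metis
qed

lemma spanP_finite:
  fixes s :: "'a::ring_1"
  assumes c: "of_nat c = (0::'a)" "c > 0" and x: "spanP s N x"
  shows "x \<in> (\<lambda>g. \<Sum>i\<le>N. of_nat (g i) * s ^ i) ` ({..N} \<rightarrow>\<^sub>E {..<c})"
proof -
  obtain f where fx: "x = (\<Sum>i\<le>N. of_nat (f i) * s ^ i)" using x unfolding spanP_def by blast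
  have m: "(of_nat (f i) :: 'a) = of_nat (f i mod c)" for i
  proof -
    have "(of_nat (f i) :: 'a) = of_nat (c * (f i div c) + f i mod c)" by simp
    also have "\<dots> = of_nat (f i mod c)" using c(1) by (simp only: of_nat_add of_nat_mult) simp
    finally show ?thesis .
  qed
  let ?g = "restrict (\<lambda>i. f i mod c) {..N}"
  have "x = (\<Sum>i\<le>N. of_nat (?g i) * s ^ i)" unfolding fx
    by (rule sum.cong) (simp_all add: m)
  moreover have "?g \<in> {..N} \<rightarrow>\<^sub>E {..<c}" using c(2) by auto
  ultimately show ?thesis by blast
qed

lemma card_T:
  fixes s :: "'a::ring_1"
  shows "finite ((\<lambda>g. \<Sum>i\<le>N. of_nat (g i) * s ^ i) ` ({..N} \<rightarrow>\<^sub>E {..<c}))"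
    "card ((\<lambda>g. \<Sum>i\<le>N. of_nat (g i) * s ^ i) ` ({..N} \<rightarrow>\<^sub>E {..<c})) \<le> c ^ Suc N"
proof -
  have "finite ({..N} \<rightarrow>\<^sub>E {..<c})" by (simp add: finite_PiE)
  then show "finite ((\<lambda>g. \<Sum>i\<le>N. of_nat (g i) * s ^ i) ` ({..N} \<rightarrow>\<^sub>E {..<c}))" by simp
  have "card ({..N} \<rightarrow>\<^sub>E {..<c}) = c ^ Suc N" by (simp add: card_PiE)
  then show "card ((\<lambda>g. \<Sum>i\<le>N. of_nat (g i) * s ^ i) ` ({..N} \<rightarrow>\<^sub>E {..<c})) \<le> c ^ Suc N"
    using card_image_le[OF \<open>finite ({..N} \<rightarrow>\<^sub>E {..<c})\<close>] by metis
qed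

lemma inv_pow_cancel:
  fixes a b :: "'a::ring_1"
  assumes "b * a = 1"
  shows "b ^ i * a ^ i = 1"
proof (induction i)
  case 0 then show ?case by simp
next
  case (Suc i)
  have "b ^ Suc i * a ^ Suc i = b * (b ^ i * a ^ i) * a"
    by (simp only: power_Suc[of b] power_Suc2[of a] mult.assoc)
  then show ?case using Suc assms by simp
qed

lemma unit_torsion:
  fixes a :: "'a::ring_1"
  assumes "b * a = 1" "finite T" "card T \<le> K" "\<And>k. a ^ k \<in> T"
  shows "\<exists>d. 1 \<le> d \<and> d \<le> K \<and> a ^ d = 1"
proof -
  have "\<not> inj_on (\<lambda>k. a ^ k) {..K}"
  proof
    assume "inj_on (\<lambda>k. a ^ k) {..K}"
    moreover have "(\<lambda>k. a ^ k) ` {..K} \<subseteq> T" using assms(4) by auto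
    ultimately have "card {..K} \<le> card T" using card_inj_on_le assms(2) by blast
    then show False using assms(3) by simp
  qed
  then obtain i j where ij: "i \<le> K" "j \<le> K" "i \<noteq> j" "a ^ i = a ^ j"
    unfolding inj_on_def by auto
  have main: "a ^ (q - p) = 1" if "p < q" "a ^ p = a ^ q" for p q
  proof -
    have "a ^ q = a ^ p * a ^ (q - p)" using that by (metis le_add_diff_inverse less_imp_le power_add)
    hence "b ^ p * a ^ q = a ^ (q - p)"
      using inv_pow_cancel[OF assms(1), of p] by (simp add: mult.assoc[symmetric])
    then show ?thesis using that inv_pow_cancel[OF assms(1), of p] by simp
  qed
  show ?thesis
  proof (cases "i < j")
    case True then show ?thesis using main[of i j] ij by (intro exI[of _ "j - i"]) auto
  next
    case False then have "j < i" using ij by simp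
    then show ?thesis using main[of j i] ij by (intro exI[of _ "i - j"]) auto
  qed
qed

lemma forward:
  assumes n: "n \<ge> 1" and D: "n_torsion_clean_decomp TYPE('a::ring_1) n"
  shows "units_finite_exponent TYPE('a)"
proof -
  define c :: nat where "c = (2^n - 1) * (3^n - 1)"
  have c0: "(of_nat c :: 'a) = 0" unfolding c_def by (rule char_lemma[OF n D])
  have "0 < n" using n by simp
  hence "1 < (2::nat)^n" "1 < (3::nat)^n" using one_less_power[of "2::nat" n] one_less_power[of "3::nat" n] by simp_all
  hence cpos: "c > 0" unfolding c_def by simp
  obtain m where nm: "n = Suc m" using n by (cases n) auto
  define K where "K = c ^ Suc n"
  define M :: nat where "M = fact (K + n)"
  have "\<forall>u::'a. ring_unit u \<longrightarrow> u ^ M = 1"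
  proof (intro allI impI)
    fix u :: 'a assume "ring_unit u"
    then obtain w where uw: "u * w = 1" "w * u = 1" unfolding ring_unit_def by blast
    obtain e v :: 'a where d: "u = e + v" "e * e = e" "ring_unit v" "v ^ n = 1" "e * v = v * e"
      using D unfolding n_torsion_clean_decomp_def by blast
    have eu: "e * u = u * e" using d by (simp add: algebra_simps)
    have ew: "e * w = w * e"
    proof -
      have "w * e = w * e * (u * w)" using uw by simp
      also have "\<dots> = w * (e * u) * w" by (simp add: mult.assoc)
      also have "\<dots> = (w * u) * e * w" by (simp add: eu mult.assoc)
      finally show ?thesis using uw by simp
    qed
    define s where "s = e * (u - 1)"
    define a where "a = 1 + s"
    define b where "b = 1 + e * (w - 1)"
    have e1: "e * (u - 1) ^ n = e" using decomp_facts(1)[OF d(1,2,5,4)] .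
    have e2: "(1 - e) * u ^ n = 1 - e" using decomp_facts(2)[OF d(1,2,5,4)] .
    have eu1: "e * (u - 1) = (u - 1) * e" using eu by (simp add: algebra_simps)
    have epow: "e ^ n = e" using idem_pow[OF d(2), of m] nm by simp
    have sn: "s ^ n = e" unfolding s_def using comm_pow_mult[OF eu1, of n] epow e1 by simp
    have ss: "s ^ Suc (Suc m) = s"
    proof -
      have "s ^ Suc (Suc m) = s ^ n * s" using nm by (simp only: power_Suc2)
      also have "\<dots> = e * s" using sn by simp
      also have "\<dots> = s" unfolding s_def using d(2) by (simp add: mult.assoc[symmetric])
      finally show ?thesis .
    qed
    have es: "e * s = s" unfolding s_def using d(2) by (simp only: mult.assoc[symmetric])
    have se: "s * e = s"
    proof -
      have "s * e = e * ((u - 1) * e)" unfolding s_def by (simp only: mult.assoc)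
      also have "\<dots> = (e * e) * (u - 1)" using eu1 by (simp only: mult.assoc)
      finally show ?thesis using d(2) s_def by simp
    qed
    have w1: "(w - 1) * e = e * (w - 1)" using ew by (simp add: algebra_simps)
    have h1: "e * (w - 1) * e = e * (w - 1)"
    proof -
      have "e * (w - 1) * e = (e * e) * (w - 1)" using w1 by (simp only: mult.assoc)
      then show ?thesis using d(2) by simp
    qed
    have "b * a = 1 + e * (u - 1) + e * (w - 1) + e * (w - 1) * e * (u - 1)"
      unfolding a_def b_def s_def by (simp add: algebra_simps)
    also have "\<dots> = 1 + e * (u - 1) + e * (w - 1) + e * (w - 1) * (u - 1)" using h1 by simp
    also have "\<dots> = 1" using uw by (simp add: algebra_simps)
    finally have ba: "b * a = 1" .
    let ?T = "(\<lambda>g. \<Sum>i\<le>Suc m. of_nat (g i) * s ^ i) ` ({..Suc m} \<rightarrow>\<^sub>E {..<c})"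
    have inT: "a ^ k \<in> ?T" for k
      unfolding a_def using spanP_finite[OF c0 cpos spanP_pow[OF ss]] .
    obtain dd where dd: "1 \<le> dd" "dd \<le> K" "a ^ dd = 1"
      using unit_torsion[OF ba card_T(1) _ inT, of K] card_T(2)[where N="Suc m" and s=s and c=c] nm K_def by auto
    have "dd dvd M" unfolding M_def using dd by (intro dvd_fact) auto
    then obtain q where q: "M = dd * q" by blast
    have aM: "a ^ M = 1" using dd(3) q by (simp add: power_mult)
    have "n dvd M" unfolding M_def using n by (intro dvd_fact) auto
    then obtain r where r: "M = n * r" by blast
    have ea: "e * a = a * e" unfolding a_def using es se by (simp add: algebra_simps)
    have eaeu: "e * a = e * u" unfolding a_def using es unfolding s_def by (simp add: algebra_simps)
    have part1: "e * u ^ M = e"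
    proof -
      have "e * u ^ M = e * (e * u) ^ M" using idem_aux[OF d(2) eu] .
      also have "\<dots> = e * (e * a) ^ M" using eaeu by simp
      also have "\<dots> = e * a ^ M" using idem_aux[OF d(2) ea] by simp
      finally show ?thesis using aM by simp
    qed
    have f2: "(1 - e) * (1 - e) = 1 - e" using d(2) by (simp add: algebra_simps)
    have fu: "(1 - e) * u ^ n = u ^ n * (1 - e)"
      using power_commuting_commutes[of u e n] eu by (simp add: algebra_simps)
    have part2: "(1 - e) * u ^ M = 1 - e"
    proof -
      have "(1 - e) * u ^ M = (1 - e) * (u ^ n) ^ r" using r by (simp add: power_mult)
      also have "\<dots> = (1 - e) * ((1 - e) * u ^ n) ^ r" using idem_aux[OF f2 fu] .
      also have "\<dots> = (1 - e) * (1 - e) ^ r" using e2 by simp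
      also have "\<dots> = 1 - e" using idem_pow[OF f2] .
      finally show ?thesis .
    qed
    have "u ^ M = e * u ^ M + (1 - e) * u ^ M" by (simp add: algebra_simps)
    then show "u ^ M = 1" using part1 part2 by simp
  qed
  moreover have "M \<ge> 1" unfolding M_def by simp
  ultimately show ?thesis unfolding units_finite_exponent_def by blast
qed

theorem theorem2p14:
  shows "(\<exists>n::nat. strongly_n_torsion_clean TYPE('a::ring_1) n) \<longleftrightarrow>
         (strongly_clean TYPE('a) \<and> units_finite_exponent TYPE('a))"
proof
  assume "\<exists>n::nat. strongly_n_torsion_clean TYPE('a::ring_1) n"
  then obtain n where n: "n \<ge> 1" and D: "n_torsion_clean_decomp TYPE('a) n"
    unfolding strongly_n_torsion_clean_def by blast
  have "strongly_clean TYPE('a)"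
    using D unfolding n_torsion_clean_decomp_def strongly_clean_def by blast
  then show "strongly_clean TYPE('a) \<and> units_finite_exponent TYPE('a)"
    using forward[OF n D] by blast
next
  assume A: "strongly_clean TYPE('a) \<and> units_finite_exponent TYPE('a)"
  then obtain m :: nat where m: "m \<ge> 1" "\<forall>u::'a. ring_unit u \<longrightarrow> u ^ m = 1"
    unfolding units_finite_exponent_def by blast
  have "n_torsion_clean_decomp TYPE('a) m"
    using A m(2) unfolding strongly_clean_def n_torsion_clean_decomp_def by blast
  then have "\<exists>k. 1 \<le> k \<and> n_torsion_clean_decomp TYPE('a) k" using m(1) by blast
  then obtain k where k: "1 \<le> k \<and> n_torsion_clean_decomp TYPE('a) k"
    "\<forall>j<k. \<not> (1 \<le> j \<and> n_torsion_clean_decomp TYPE('a) j)"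
    using exists_least_iff[of "\<lambda>k. 1 \<le> k \<and> n_torsion_clean_decomp TYPE('a) k"] by blast
  then have "strongly_n_torsion_clean TYPE('a) k"
    unfolding strongly_n_torsion_clean_def by blast
  then show "\<exists>n::nat. strongly_n_torsion_clean TYPE('a::ring_1) n" by blast
qed

end
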